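(* Let $e\geqslant 1$ be an integer and $b\geqslant 2$ an even integer, and let $D_{e,b}$ be the cycle set for $T_{e,b}$. Assume that for every $x\in D_{e,b}$ there exists a positive integer $h_x$ such that both $h_x+1$ and $h_x+x$ are $(e,b)$-happy. Then there exists a positive integer $h$ such that $h+x$ is $(e,b)$-happy for every $x\in D_{e,b}$.
   Context: For a positive integer $n=\sum_{j=0}^k a_j b^j$ with $0\leqslant a_j<b$, $T_{e,b}(n)=\sum_{j=0}^k a_j^e$; $T_{e,b}^r$ is the $r$-th iterate, $T_{e,b}^0(n)=n$. A positive integer $n$ is $(e,b)$-happy if $T_{e,b}^r(n)=1$ for some $r\geqslant 0$. A set $D_{e,b}$ of positive integers is a cycle set for $T_{e,b}$ if (1) for every positive integer $n$ there is $r\geqslant 0$ with $T_{e,b}^r(n)\in D_{e,b}$; (2) $T_{e,b}(x)\in D_{e,b}$ for all $x\in D_{e,b}$; (3) for every $x\in D_{e,b}$ there is $r\geqslant 1$ with $T_{e,b}^r(x)=x$. Such a set is finite and uniquely determined (it is the set of positive integers $x$ with $T_{e,b}^r(x)=x$ for some $r\geqslant1$). *)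

theory Defs
  imports Main
begin

fun T :: "nat \<Rightarrow> nat \<Rightarrow> nat \<Rightarrow> nat" where
  "T e b n = (if n = 0 \<or> b < 2 then 0 else (n mod b) ^ e + T e b (n div b))"

definition happy :: "nat \<Rightarrow> nat \<Rightarrow> nat \<Rightarrow> bool" where
  "happy e b n \<longleftrightarrow> n > 0 \<and> (\<exists>r. (T e b ^^ r) n = 1)"

definition cycle_set :: "nat \<Rightarrow> nat \<Rightarrow> nat set \<Rightarrow> bool" where
  "cycle_set e b D \<longleftrightarrow>
     (\<forall>x\<in>D. x > 0) \<and>
     (\<forall>n>0. \<exists>r. (T e b ^^ r) n \<in> D) \<and>
     (\<forall>x\<in>D. T e b x \<in> D) \<and>
     (\<forall>x\<in>D. \<exists>r\<ge>1. (T e b ^^ r) x = x)"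

end

theory Submission
  imports Defs
begin

declare T.simps[simp del]

lemma T_zero: "T e b 0 = 0"
  by (subst T.simps) simp

lemma T_step: "n > 0 \<Longrightarrow> b \<ge> 2 \<Longrightarrow> T e b n = (n mod b) ^ e + T e b (n div b)"
  by (subst T.simps) simp

lemma T_one: "b \<ge> 2 \<Longrightarrow> T e b 1 = 1"
  by (simp add: T_step T_zero)

lemma T_concat:
  assumes e: "e \<ge> 1" and b: "b \<ge> 2"
  shows "n < b ^ k \<Longrightarrow> T e b (A * b ^ k + n) = T e b A + T e b n"
proof (induction k arbitrary: n)
  case 0
  then show ?case by (simp add: T_zero)
next
  case (Suc k)
  define m where "m = A * b ^ Suc k + n"
  show ?case
  proof (cases "m = 0")
    case True
    then have "A = 0" "n = 0" using b by (auto simp: m_def)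
    then show ?thesis by (simp add: T_zero)
  next
    case False
    have m2: "m = n + b * (A * b ^ k)" by (simp add: m_def algebra_simps)
    have mm: "m mod b = n mod b" unfolding m2 by simp
    have md: "m div b = A * b ^ k + n div b" unfolding m2 using b by simp
    have nd: "n div b < b ^ k" using Suc.prems b
      by (simp add: less_mult_imp_div_less mult.commute)
    have IH: "T e b (A * b ^ k + n div b) = T e b A + T e b (n div b)"
      using Suc.IH nd by blast
    have Tm: "T e b m = (n mod b) ^ e + T e b A + T e b (n div b)"
      using T_step[OF _ b, of m e] False mm md IH by simp
    have Tn: "T e b n = (n mod b) ^ e + T e b (n div b)"
    proof (cases "n = 0")
      case True
      then show ?thesis using e by (simp add: T_zero)
    qed (simp add: T_step b)
    show ?thesis using Tm Tn by (simp add: m_def)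
  qed
qed

fun rep :: "nat \<Rightarrow> nat \<Rightarrow> nat" where
  "rep b 0 = 0"
| "rep b (Suc m) = rep b m * b + 1"

lemma T_rep: "b \<ge> 2 \<Longrightarrow> T e b (rep b m) = m"
proof (induction m)
  case 0
  then show ?case by (simp add: T_zero)
next
  case (Suc m)
  have "(rep b m * b + 1) mod b = 1" using Suc.prems by (simp add: mod_Suc)
  moreover have "(rep b m * b + 1) div b = rep b m" using Suc.prems by (simp add: div_Suc mod_Suc)
  ultimately show ?case using T_step[of "rep b m * b + 1" b e] Suc by simp
qed

lemma lift:
  assumes e: "e \<ge> 1" and b: "b \<ge> 2"
  shows "finite N \<Longrightarrow> \<exists>c. \<forall>n\<in>N. (T e b ^^ R) (c + n) = g + (T e b ^^ R) n"
proof (induction R arbitrary: N)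
  case 0
  then show ?case by auto
next
  case (Suc R)
  obtain c' where c': "\<forall>m\<in>T e b ` N. (T e b ^^ R) (c' + m) = g + (T e b ^^ R) m"
    using Suc.IH[of "T e b ` N"] Suc.prems by blast
  obtain k where k: "\<forall>n\<in>N. n < k" using Suc.prems finite_nat_set_iff_bounded by blast
  have kb: "\<forall>n\<in>N. n < b ^ k"
  proof
    fix n assume "n \<in> N"
    then have "n < k" using k by blast
    also have "k < 2 ^ k" by (rule less_exp)
    also have "2 ^ k \<le> b ^ k" using b by (simp add: power_mono)
    finally show "n < b ^ k" .
  qed
  define c where "c = rep b c' * b ^ k"
  have "\<forall>n\<in>N. (T e b ^^ Suc R) (c + n) = g + (T e b ^^ Suc R) n"
  proof
    fix n assume n: "n \<in> N"
    have "T e b (c + n) = c' + T e b n"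
      using T_concat[OF e b, of n k "rep b c'"] kb n T_rep[OF b] by (simp add: c_def)
    then show "(T e b ^^ Suc R) (c + n) = g + (T e b ^^ Suc R) n"
      using c' n by (simp add: funpow_Suc_right del: funpow.simps)
  qed
  then show ?case by blast
qed

lemma iter_one: "b \<ge> 2 \<Longrightarrow> (T e b ^^ k) 1 = 1"
  by (induction k) (auto simp: T_one[simplified])

lemma iter_D: "cycle_set e b D \<Longrightarrow> x \<in> D \<Longrightarrow> (T e b ^^ k) x \<in> D"
  by (induction k) (auto simp: cycle_set_def)


lemma digit_bound: "(b::nat) \<ge> 2 \<Longrightarrow> (n mod b) ^ e \<le> (b - 1) ^ e"
proof (rule power_mono)
  assume "(b::nat) \<ge> 2"
  then have "n mod b < b" by simp
  then show "n mod b \<le> b - 1" by linarith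
qed simp

lemma T_le_lin:
  fixes e b n :: nat
  assumes b: "b \<ge> 2"
  defines "P \<equiv> (b - 1) ^ e"
  defines "K \<equiv> Max (T e b ` {..<b * P + b})"
  shows "T e b n \<le> n + K"
proof (induction n rule: less_induct)
  case (less n)
  show ?case
  proof (cases "n < b * P + b")
    case True
    then have "T e b n \<le> K" unfolding K_def by (intro Max_ge) auto
    then show ?thesis by simp
  next
    case False
    define q where "q = n div b"
    have n0: "n > 0" using False b by auto
    have "b * (P + 1) \<le> n" using False by (simp add: algebra_simps)
    then have qP: "P + 1 \<le> q" unfolding q_def using b
      by (metis div_le_mono nonzero_mult_div_cancel_left not_numeral_le_zero le_zero_eq)
    have qn: "q < n" unfolding q_def using n0 b by simp
    have "T e b n = (n mod b) ^ e + T e b q" unfolding q_def using T_step[OF n0 b] .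
    also have "\<dots> \<le> P + (q + K)" using digit_bound[OF b] less.IH[OF qn] unfolding P_def
      by (intro add_mono) auto
    also have "\<dots> \<le> n + K"
    proof -
      have "b * q \<le> n" unfolding q_def by simp
      moreover have "q + q \<le> b * q" using b by (metis mult_2 mult_le_mono1)
      ultimately show ?thesis using qP by linarith
    qed
    finally show ?thesis .
  qed
qed

lemma T_less:
  assumes b: "b \<ge> 2"
  shows "\<exists>B. \<forall>n\<ge>B. T e b n < n"
proof -
  define P where "P = (b - 1) ^ e"
  define K where "K = Max (T e b ` {..<b * P + b})"
  have lin: "\<And>m. T e b m \<le> m + K" using T_le_lin[OF b] unfolding P_def K_def by blast
  have "\<forall>n\<ge>b * (P + K + 1). T e b n < n"
  proof (intro allI impI)
    fix n assume nB: "b * (P + K + 1) \<le> n"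
    define q where "q = n div b"
    have n0: "n > 0" using nB b by (metis add_gr_0 less_le_trans mult_pos_pos zero_less_one le_less_trans less_le_trans zero_less_numeral)
    have qP: "P + K + 1 \<le> q" unfolding q_def using b nB
      by (metis div_le_mono nonzero_mult_div_cancel_left not_numeral_le_zero le_zero_eq)
    have "T e b n = (n mod b) ^ e + T e b q" unfolding q_def using T_step[OF n0 b] .
    also have "\<dots> \<le> P + (q + K)" using digit_bound[OF b] lin[of q] unfolding P_def
      by (intro add_mono) auto
    also have "\<dots> < n"
    proof -
      have "b * q \<le> n" unfolding q_def by simp
      moreover have "q + q \<le> b * q" using b by (metis mult_2 mult_le_mono1)
      ultimately show ?thesis using qP by linarith
    qed
    finally show "T e b n < n" .
  qed
  then show ?thesis by blast
qed

lemma D_finite: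
  assumes b: "b \<ge> 2" and cs: "cycle_set e b D"
  shows "finite D"
proof -
  obtain B where B: "\<forall>n\<ge>B. T e b n < n" using T_less[OF b] by blast
  define C where "C = Max (T e b ` {..<B})"
  have "D \<subseteq> {..C}"
  proof
    fix x assume x: "x \<in> D"
    obtain r where r: "r \<ge> 1" "(T e b ^^ r) x = x" using cs x unfolding cycle_set_def by blast
    define Orb where "Orb = (\<lambda>j. (T e b ^^ j) x) ` {..<r}"
    have fO: "finite Orb" unfolding Orb_def by simp
    have xO: "x \<in> Orb" unfolding Orb_def using r by (intro image_eqI[of _ _ 0]) auto
    define m where "m = Max Orb"
    have mO: "m \<in> Orb" unfolding m_def using fO xO by (intro Max_in) auto
    have leM: "\<And>y. y \<in> Orb \<Longrightarrow> y \<le> m" unfolding m_def using fO by simp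
    obtain j where j: "j < r" "m = (T e b ^^ j) x" using mO unfolding Orb_def by blast
    have "\<exists>p\<in>Orb. m = T e b p"
    proof (cases j)
      case 0
      then have "m = (T e b ^^ Suc (r - 1)) x" using j r by simp
      then have "m = T e b ((T e b ^^ (r - 1)) x)" by simp
      moreover have "(T e b ^^ (r - 1)) x \<in> Orb" unfolding Orb_def using r by force
      ultimately show ?thesis by blast
    next
      case (Suc i)
      then have "m = T e b ((T e b ^^ i) x)" using j by simp
      moreover have "(T e b ^^ i) x \<in> Orb" unfolding Orb_def using j Suc by force
      ultimately show ?thesis by blast
    qed
    then obtain p where p: "p \<in> Orb" "m = T e b p" by blast
    have "p < B"
    proof (rule ccontr)
      assume "\<not> p < B"
      then have "T e b p < p" using B by simp
      then show False using leM[OF p(1)] p(2) by simp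
    qed
    then have "m \<le> C" unfolding C_def using p by (intro Max_ge) auto
    then show "x \<in> {..C}" using leM[OF xO] by simp
  qed
  then show ?thesis using finite_subset by blast
qed


lemma fpa: "(f ^^ (m + n)) x = (f ^^ m) ((f ^^ n) x)"
  by (simp add: funpow_add)

lemma main_ind:
  assumes e: "e \<ge> 1" and b: "b \<ge> 2" and cs: "cycle_set e b D"
    and hyp: "\<forall>x\<in>D. \<exists>h>0. happy e b (h + 1) \<and> happy e b (h + x)"
  shows "finite S \<Longrightarrow> S \<subseteq> D \<Longrightarrow> \<exists>h>0. \<exists>R. \<forall>y\<in>S. (T e b ^^ R) (h + y) = 1"
proof (induction S rule: finite_induct)
  case empty
  then show ?case by (intro exI[of _ 1]) auto
next
  case (insert x S)
  obtain h R where h: "h > 0" "\<forall>y\<in>S. (T e b ^^ R) (h + y) = 1"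
    using insert by auto
  have hx: "h + x > 0" using h by simp
  have allr: "\<forall>n>0. \<exists>r. (T e b ^^ r) n \<in> D" using cs unfolding cycle_set_def by simp
  obtain r0 where r0: "(T e b ^^ r0) (h + x) \<in> D" using allr[rule_format, OF hx] by (elim exE)
  define R' where "R' = r0 + R"
  have S1: "\<forall>y\<in>S. (T e b ^^ R') (h + y) = 1"
  proof
    fix y assume "y \<in> S"
    then have "(T e b ^^ R) (h + y) = 1" using h(2) by (rule bspec[rotated])
    then show "(T e b ^^ R') (h + y) = 1" unfolding R'_def fpa using iter_one[OF b] by simp
  qed
  define d where "d = (T e b ^^ R') (h + x)"
  have "d = (T e b ^^ R) ((T e b ^^ r0) (h + x))" unfolding d_def R'_def
    unfolding add.commute[of r0 R] fpa by (rule refl)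
  then have dD: "d \<in> D" using iter_D[OF cs r0, of R] by simp
  obtain g where g: "g > 0" "happy e b (g + 1)" "happy e b (g + d)" using hyp dD by blast
  obtain r1 where r1: "(T e b ^^ r1) (g + 1) = 1" using g unfolding happy_def by blast
  obtain r2 where r2: "(T e b ^^ r2) (g + d) = 1" using g unfolding happy_def by blast
  have fN: "finite ((\<lambda>y. h + y) ` insert x S)" using insert by blast
  obtain c where c: "\<forall>n\<in>(\<lambda>y. h + y) ` insert x S. (T e b ^^ R') (c + n) = g + (T e b ^^ R') n"
    using lift[OF e b fN, of R' g] by blast
  have cc: "\<And>y. y \<in> insert x S \<Longrightarrow> (T e b ^^ R') (c + h + y) = g + (T e b ^^ R') (h + y)"
  proof -
    fix y assume "y \<in> insert x S"
    then have "h + y \<in> (\<lambda>y. h + y) ` insert x S" by blast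
    then have "(T e b ^^ R') (c + (h + y)) = g + (T e b ^^ R') (h + y)" using c by blast
    then show "(T e b ^^ R') (c + h + y) = g + (T e b ^^ R') (h + y)" by (simp add: add.assoc)
  qed
  have A: "\<forall>y\<in>S. (T e b ^^ (r2 + r1 + R')) (c + h + y) = 1"
  proof
    fix y assume y: "y \<in> S"
    have "(T e b ^^ R') (c + h + y) = g + 1" using cc[of y] y S1 by simp
    then have "(T e b ^^ (r2 + r1 + R')) (c + h + y) = (T e b ^^ r2) ((T e b ^^ r1) (g + 1))"
      by (simp only: fpa)
    then show "(T e b ^^ (r2 + r1 + R')) (c + h + y) = 1"
      using r1 iter_one[OF b] by simp
  qed
  have B: "(T e b ^^ (r2 + r1 + R')) (c + h + x) = 1"
  proof -
    have "(T e b ^^ R') (c + h + x) = g + d" using cc[of x] d_def by simp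
    then have "(T e b ^^ (r1 + r2 + R')) (c + h + x) = (T e b ^^ r1) ((T e b ^^ r2) (g + d))"
      by (simp only: fpa)
    then have "(T e b ^^ (r1 + r2 + R')) (c + h + x) = 1"
      using r2 iter_one[OF b] by simp
    then show ?thesis by (simp only: add.commute[of r1 r2])
  qed
  show ?case using A B h(1) by (intro exI[of _ "c + h"]) auto
qed

theorem lemma2p2:
  fixes e b :: nat and D :: "nat set"
  assumes "e \<ge> 1" and "b \<ge> 2" and "even b"
    and "cycle_set e b D"
    and "\<forall>x\<in>D. \<exists>h>0. happy e b (h + 1) \<and> happy e b (h + x)"
  shows "\<exists>h>0. \<forall>x\<in>D. happy e b (h + x)"
proof -
  have "finite D" using D_finite assms(2,4) by blast
  then obtain h R where h: "h > 0" "\<forall>y\<in>D. (T e b ^^ R) (h + y) = 1"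
    using main_ind[OF assms(1,2,4,5), of D] by blast
  then show ?thesis unfolding happy_def by auto
qed

end
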